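(* For every finite graph $\Gamma$ there is a finite group $G$ such that $\Gamma$ is isomorphic to an induced subgraph of the difference graph $\mathcal{D}(G)$. Moreover, $G$ can be chosen to be a cyclic group of squarefree order.
   Context: For a finite group $G$ with identity $e$: the intersection power graph $\mathcal{G}_I(G)$ has vertex set $G$, two distinct non-identity vertices $x,y$ being adjacent iff $\langle x\rangle\cap\langle y\rangle\neq\{e\}$, and $e$ being adjacent to every other vertex. The power graph $\mathcal{P}(G)$ has vertex set $G$, two distinct vertices being adjacent iff one is a power of the other. The difference graph $\mathcal{D}(G)$ is the graph with edge set $E(\mathcal{G}_I(G))\setminus E(\mathcal{P}(G))$ on vertex set $G$, with all isolated vertices removed. *)

theory Defs
  imports "HOL-Algebra.Algebra" "HOL-Computational_Algebra.Squarefree"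
begin

definition finite_simple_graph :: "'a set \<Rightarrow> ('a \<Rightarrow> 'a \<Rightarrow> bool) \<Rightarrow> bool" where
  "finite_simple_graph V E \<longleftrightarrow> finite V \<and>
     (\<forall>x y. E x y \<longrightarrow> x \<in> V \<and> y \<in> V) \<and>
     (\<forall>x y. E x y \<longrightarrow> E y x) \<and> (\<forall>x. \<not> E x x)"

definition ipg_edge :: "('g, 'b) monoid_scheme \<Rightarrow> 'g \<Rightarrow> 'g \<Rightarrow> bool" where
  "ipg_edge G x y \<longleftrightarrow> x \<in> carrier G \<and> y \<in> carrier G \<and> x \<noteq> y \<and>
     (x = \<one>\<^bsub>G\<^esub> \<or> y = \<one>\<^bsub>G\<^esub> \<or>
      generate G {x} \<inter> generate G {y} \<noteq> {\<one>\<^bsub>G\<^esub>})"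

definition pg_edge :: "('g, 'b) monoid_scheme \<Rightarrow> 'g \<Rightarrow> 'g \<Rightarrow> bool" where
  "pg_edge G x y \<longleftrightarrow> x \<in> carrier G \<and> y \<in> carrier G \<and> x \<noteq> y \<and>
     ((\<exists>k::int. y = x [^]\<^bsub>G\<^esub> k) \<or> (\<exists>k::int. x = y [^]\<^bsub>G\<^esub> k))"

definition diff_edge :: "('g, 'b) monoid_scheme \<Rightarrow> 'g \<Rightarrow> 'g \<Rightarrow> bool" where
  "diff_edge G x y \<longleftrightarrow> ipg_edge G x y \<and> \<not> pg_edge G x y"

definition diff_verts :: "('g, 'b) monoid_scheme \<Rightarrow> 'g set" where
  "diff_verts G = {x \<in> carrier G. \<exists>y. diff_edge G x y}"

definition induced_subgraph_iso ::
  "'a set \<Rightarrow> ('a \<Rightarrow> 'a \<Rightarrow> bool) \<Rightarrow> 'c set \<Rightarrow> ('c \<Rightarrow> 'c \<Rightarrow> bool) \<Rightarrow> bool" where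
  "induced_subgraph_iso V E W F \<longleftrightarrow>
     (\<exists>f. inj_on f V \<and> f ` V \<subseteq> W \<and> (\<forall>x\<in>V. \<forall>y\<in>V. E x y \<longleftrightarrow> F (f x) (f y)))"

end

theory Submission
  imports Defs
begin

definition Zm :: "nat \<Rightarrow> nat monoid" where
  "Zm n = \<lparr>carrier = {..<n}, monoid.mult = (\<lambda>a b. (a + b) mod n), one = 0\<rparr>"

lemma Zm_simps [simp]: "carrier (Zm n) = {..<n}" "x \<otimes>\<^bsub>Zm n\<^esub> y = (x + y) mod n" "\<one>\<^bsub>Zm n\<^esub> = 0"
  by (simp_all add: Zm_def)

lemma Zm_group: assumes "0 < n" shows "group (Zm n)"
proof (rule groupI)
  fix x assume "x \<in> carrier (Zm n)"
  then have "x < n" by simp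
  show "\<exists>y\<in>carrier (Zm n). y \<otimes>\<^bsub>Zm n\<^esub> x = \<one>\<^bsub>Zm n\<^esub>"
    using \<open>x < n\<close> assms by (intro bexI[of _ "(n - x) mod n"]) (auto simp: mod_add_left_eq)
qed (use assms in \<open>auto simp: mod_add_left_eq mod_add_right_eq add.assoc\<close>)

lemma Zm_inv: assumes "0 < n" "x < n" shows "inv\<^bsub>Zm n\<^esub> x = (n - x) mod n"
  using assms by (intro group.inv_equality[OF Zm_group]) (auto simp: mod_add_left_eq)

lemma Zm_generate:
  assumes "0 < n" "x < n"
  shows "generate (Zm n) {x} = {y. y < n \<and> gcd x n dvd y}"
proof
  show "generate (Zm n) {x} \<subseteq> {y. y < n \<and> gcd x n dvd y}"
  proof
    fix h assume "h \<in> generate (Zm n) {x}"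
    then show "h \<in> {y. y < n \<and> gcd x n dvd y}"
    proof induction
      case one then show ?case using assms by simp
    next
      case (incl h) then show ?case using assms by simp
    next
      case (inv h) then show ?case using assms
        by (auto simp: Zm_inv intro!: dvd_mod)
    next
      case (eng h1 h2) then show ?case using assms
        by (auto intro!: dvd_mod)
    qed
  qed
next
  have pw: "(k * x) mod n \<in> generate (Zm n) {x}" for k
  proof (induction k)
    case 0 then show ?case using generate.one[of "Zm n" "{x}"] by simp
  next
    case (Suc k)
    have "(k * x) mod n \<otimes>\<^bsub>Zm n\<^esub> x \<in> generate (Zm n) {x}"
      by (rule generate.eng[OF Suc generate.incl]) simp
    moreover have "(k * x) mod n \<otimes>\<^bsub>Zm n\<^esub> x = ((k * x) mod n + x) mod n" by simp
    moreover have "((k * x) mod n + x) mod n = (k * x + x) mod n" by (rule mod_add_left_eq)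
    moreover have "k * x + x = Suc k * x" by simp
    ultimately show ?case by metis
  qed
  show "{y. y < n \<and> gcd x n dvd y} \<subseteq> generate (Zm n) {x}"
  proof
    fix y assume y: "y \<in> {y. y < n \<and> gcd x n dvd y}"
    then obtain t where t: "y = gcd x n * t" by auto
    show "y \<in> generate (Zm n) {x}"
    proof (cases "x = 0")
      case True
      then have "y = 0" using y by (auto dest: dvd_imp_le)
      then show ?thesis using pw[of 0] by simp
    next
      case False
      then obtain a b where ab: "x * a = n * b + gcd x n" using bezout_nat by blast
      have "(a * t) * x = (x * a) * t" by (simp add: ac_simps)
      also have "\<dots> = (n * b + gcd x n) * t" using ab by simp
      also have "\<dots> = n * (b * t) + y" using t by (simp add: algebra_simps)
      finally have "(a * t) * x = n * (b * t) + y" .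
      then have "((a * t) * x) mod n = y" using y by simp
      then show ?thesis using pw[of "a*t"] by simp
    qed
  qed
qed


definition el :: "'l set \<Rightarrow> ('l \<Rightarrow> nat) \<Rightarrow> 'l set \<Rightarrow> nat" where
  "el L f A = (\<Prod>l\<in>L-A. f l)"

locale primelab =
  fixes L :: "'l set" and f :: "'l \<Rightarrow> nat"
  assumes finL: "finite L" and injf: "inj_on f L" and primef: "\<And>l. l \<in> L \<Longrightarrow> Factorial_Ring.prime (f l)"
begin

lemma el_pos: "el L f A > 0"
  unfolding el_def using primef prime_gt_0_nat by (auto intro!: prod_pos)

lemma el_dvd_iff: assumes "l \<in> L" shows "f l dvd el L f A \<longleftrightarrow> l \<notin> A"
proof
  assume "f l dvd el L f A"
  then have "\<exists>x\<in>L-A. f l dvd f x" unfolding el_def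
    by (subst (asm) prime_dvd_prod_iff[OF _ primef[OF assms]]) (use finL in auto)
  then obtain x where x: "x \<in> L - A" "f l dvd f x" by blast
  then have "f l = f x" using x assms by (intro primes_dvd_imp_eq primef) auto
  then have "l = x" using injf assms x by (auto dest: inj_onD)
  then show "l \<notin> A" using x by auto
next
  assume "l \<notin> A"
  then show "f l dvd el L f A" unfolding el_def using assms finL
    by (intro dvd_prodI) auto
qed

lemma prod_dvd_gen: "F \<subseteq> L \<Longrightarrow> (\<forall>l\<in>F. f l dvd y) \<Longrightarrow> (\<Prod>l\<in>F. f l) dvd y"
proof (induction F rule: infinite_finite_induct)
  case (infinite F) then show ?case using finL finite_subset by blast
next
  case empty then show ?case by simp
next
  case (insert x F)
  have "coprime (f x) (\<Prod>l\<in>F. f l)"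
  proof (rule prod_coprime_right)
    fix i assume "i \<in> F"
    then have "f x \<noteq> f i" using insert injf by (auto dest: inj_onD)
    moreover have "i \<in> L" using insert.prems \<open>i \<in> F\<close> by auto
    ultimately show "coprime (f x) (f i)" using insert.prems by (intro primes_coprime primef) auto
  qed
  then show ?case using insert by (auto intro!: divides_mult)
qed

lemma el_dvd_y: "(\<forall>l\<in>L-A. f l dvd y) \<Longrightarrow> el L f A dvd y"
  unfolding el_def by (rule prod_dvd_gen) auto

lemma el_dvd_el: assumes "B \<subseteq> L" shows "el L f A dvd el L f B \<longleftrightarrow> B \<subseteq> A"
proof
  assume h: "el L f A dvd el L f B"
  show "B \<subseteq> A"
  proof
    fix l assume "l \<in> B"
    show "l \<in> A"
    proof (rule ccontr)
      assume "l \<notin> A"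
      then have "f l dvd el L f B" using el_dvd_iff[of l A] \<open>l \<in> B\<close> assms h dvd_trans by blast
      then show False using el_dvd_iff[of l B] \<open>l \<in> B\<close> assms by blast
    qed
  qed
next
  assume "B \<subseteq> A" then show "el L f A dvd el L f B"
    unfolding el_def using finL by (intro prod_dvd_prod_subset) auto
qed

lemma el_less: assumes "A \<subseteq> L" "A \<noteq> {}" shows "el L f A < el L f {}"
proof -
  have "el L f {} = el L f A * (\<Prod>l\<in>A. f l)"
    unfolding el_def using assms finL by (simp add: prod.subset_diff)
  moreover obtain a where a: "a \<in> A" using assms by auto
  have fA: "finite A" using assms finL finite_subset by blast
  have "f a dvd (\<Prod>l\<in>A. f l)" using a fA by (intro dvd_prodI)
  moreover have "f a > 1" using a assms primef prime_gt_1_nat by auto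
  moreover have "\<forall>l\<in>A. f l \<noteq> 0" using assms primef by (metis subsetD not_prime_0)
  then have "(\<Prod>l\<in>A. f l) \<noteq> 0" using fA by simp
  ultimately have "(\<Prod>l\<in>A. f l) > 1"
    by (metis dvd_imp_le less_le_trans not_gr0 nat_neq_iff)
  then show ?thesis using el_pos[of A] \<open>el L f {} = _\<close> by simp
qed

abbreviation "NN \<equiv> el L f {}"

lemma NN_pos: "NN > 0" by (rule el_pos)

lemma gen_el: assumes "A \<subseteq> L" "A \<noteq> {}"
  shows "generate (Zm NN) {el L f A} = {y. y < NN \<and> el L f A dvd y}"
proof -
  have "el L f A dvd NN" using el_dvd_el by auto
  then have "gcd (el L f A) NN = el L f A" by (simp add: gcd_nat.absorb1)
  then show ?thesis using Zm_generate[OF NN_pos el_less[OF assms]] by simp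
qed

lemma main_diff:
  assumes "A \<subseteq> L" "A \<noteq> {}" "B \<subseteq> L" "B \<noteq> {}" "\<not> A \<subseteq> B" "\<not> B \<subseteq> A"
  shows "diff_edge (Zm NN) (el L f A) (el L f B) \<longleftrightarrow> A \<inter> B \<noteq> {}"
proof -
  interpret G: group "Zm NN" by (rule Zm_group[OF NN_pos])
  let ?a = "el L f A" and ?b = "el L f B"
  have ac: "?a \<in> carrier (Zm NN)" "?b \<in> carrier (Zm NN)" using el_less assms by auto
  have ne: "?a \<noteq> ?b" using el_dvd_el assms by (metis dvd_refl)
  have nz: "?a \<noteq> 0" "?b \<noteq> 0" using el_pos by (metis less_irrefl)+
  have pw: "(\<exists>k::int. y = x [^]\<^bsub>Zm NN\<^esub> k) \<longleftrightarrow> y \<in> generate (Zm NN) {x}" if "x \<in> carrier (Zm NN)" for x y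
    using G.generate_pow[OF that] by auto
  have npg: "\<not> pg_edge (Zm NN) ?a ?b"
    unfolding pg_edge_def using pw[OF ac(1)] pw[OF ac(2)] gen_el assms el_dvd_el by auto
  have "ipg_edge (Zm NN) ?a ?b \<longleftrightarrow> A \<inter> B \<noteq> {}"
  proof
    assume "ipg_edge (Zm NN) ?a ?b"
    then have "generate (Zm NN) {?a} \<inter> generate (Zm NN) {?b} \<noteq> {0}"
      unfolding ipg_edge_def using nz by simp
    moreover have "0 \<in> generate (Zm NN) {?a} \<inter> generate (Zm NN) {?b}"
      using gen_el assms NN_pos by auto
    ultimately obtain y where y: "y \<in> generate (Zm NN) {?a} \<inter> generate (Zm NN) {?b}" "y \<noteq> 0" by blast
    then have y2: "y < NN" "?a dvd y" "?b dvd y" using gen_el assms by auto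
    show "A \<inter> B \<noteq> {}"
    proof
      assume dj: "A \<inter> B = {}"
      have "\<forall>l\<in>L-{}. f l dvd y"
      proof
        fix l assume "l \<in> L - {}"
        then have "l \<notin> A \<or> l \<notin> B" "l \<in> L" using dj by auto
        then show "f l dvd y" using el_dvd_iff y2 dvd_trans by blast
      qed
      then have "NN dvd y" by (rule el_dvd_y)
      then show False using y2 y by (auto dest: dvd_imp_le)
    qed
  next
    assume "A \<inter> B \<noteq> {}"
    then obtain l where l: "l \<in> A" "l \<in> B" by auto
    let ?y = "el L f {l}"
    have "?y < NN" "?y \<noteq> 0" using el_less[of "{l}"] el_pos[of "{l}"] l assms by auto
    moreover have "?a dvd ?y" "?b dvd ?y" using el_dvd_el l assms by auto
    ultimately have yin: "?y \<in> generate (Zm NN) {?a} \<inter> generate (Zm NN) {?b}" using gen_el assms by auto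
    have "generate (Zm NN) {?a} \<inter> generate (Zm NN) {?b} \<noteq> {0}"
    proof
      assume "generate (Zm NN) {?a} \<inter> generate (Zm NN) {?b} = {0}"
      then have "?y = 0" using yin by simp
      then show False using \<open>?y \<noteq> 0\<close> by simp
    qed
    then show "ipg_edge (Zm NN) ?a ?b" unfolding ipg_edge_def using ac ne by simp
  qed
  then show ?thesis unfolding diff_edge_def using npg by simp
qed

end


theorem theorem3p8:
  fixes V :: "'a set" and E :: "'a \<Rightarrow> 'a \<Rightarrow> bool"
  assumes "finite_simple_graph V E"
  shows "\<exists>G :: nat monoid. group G \<and> finite (carrier G) \<and> cyclic_group G \<and>
           squarefree (order G) \<and>
           induced_subgraph_iso V E (diff_verts G) (diff_edge G)"
proof -
  from assms have finV: "finite V" and EV: "\<And>x y. E x y \<Longrightarrow> x \<in> V \<and> y \<in> V"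
    and Esym: "\<And>x y. E x y \<Longrightarrow> E y x" and Eirr: "\<And>x. \<not> E x x"
    unfolding finite_simple_graph_def by auto
  define L :: "('a set \<times> nat) set" where
    "L = (\<lambda>v. ({v}, 0)) ` V \<union> (\<lambda>v. ({v}, 1)) ` V \<union> (\<lambda>(u,v). ({u,v}, 0)) ` {(u,v). E u v} \<union> {({}, 0)}"
  have "{(u,v). E u v} \<subseteq> V \<times> V" using EV by auto
  then have "finite {(u,v). E u v}" using finV by (auto intro: finite_subset)
  then have finL: "finite L" unfolding L_def using finV by auto
  obtain B where B: "finite B" "card B = card L" "B \<subseteq> {p::nat. Factorial_Ring.prime p}"
    using infinite_arbitrarily_large[OF primes_infinite] by blast
  obtain f where f: "bij_betw f L B" using finite_same_card_bij[OF finL B(1) B(2)[symmetric]] by blast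
  interpret P: primelab L f
    using finL f B(3) by unfold_locales (auto simp: bij_betw_def)
  define S where "S v = {l \<in> L. v \<in> fst l}" for v
  define T where "T v = {({v}, 0::nat), ({}, 0)}" for v :: 'a
  define G where "G = Zm P.NN"
  define \<phi> where "\<phi> v = el L f (S v)" for v
  have SL: "S v \<subseteq> L" for v by (auto simp: S_def)
  have Sin: "({v},0) \<in> S v" "({v},1) \<in> S v" if "v \<in> V" for v using that by (auto simp: S_def L_def)
  have Sne: "S v \<noteq> {}" if "v \<in> V" for v using Sin[OF that] by auto
  have TL: "T v \<subseteq> L" if "v \<in> V" for v using that by (auto simp: T_def L_def)
  have grp: "group G" using Zm_group[OF P.NN_pos] G_def by simp
  have carr: "carrier G = {..<P.NN}" by (simp add: G_def)
  have Sinc: "\<not> S u \<subseteq> S v" if "u \<in> V" "u \<noteq> v" for u v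
    using Sin(1)[OF that(1)] that by (auto simp: S_def)
  have adj: "S u \<inter> S v \<noteq> {} \<longleftrightarrow> E u v" if "u \<in> V" "v \<in> V" "u \<noteq> v" for u v
  proof
    assume "S u \<inter> S v \<noteq> {}"
    then obtain l where l: "l \<in> L" "u \<in> fst l" "v \<in> fst l" by (auto simp: S_def)
    then show "E u v" using that Esym unfolding L_def by auto
  next
    assume "E u v"
    then have "({u,v},0::nat) \<in> (\<lambda>(u,v). ({u,v}, 0)) ` {(u,v). E u v}"
      by (intro image_eqI[of _ _ "(u,v)"]) auto
    then have "({u,v},0::nat) \<in> L" unfolding L_def by blast
    then show "S u \<inter> S v \<noteq> {}" by (auto simp: S_def)
  qed
  have diffS: "diff_edge G (\<phi> u) (\<phi> v) \<longleftrightarrow> E u v" if "u \<in> V" "v \<in> V" for u v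
  proof (cases "u = v")
    case True then show ?thesis using Eirr unfolding diff_edge_def ipg_edge_def by simp
  next
    case False
    have "diff_edge G (\<phi> u) (\<phi> v) \<longleftrightarrow> S u \<inter> S v \<noteq> {}"
      unfolding G_def \<phi>_def
      by (rule P.main_diff[OF SL Sne[OF that(1)] SL Sne[OF that(2)] Sinc[OF that(1) False]
            Sinc[OF that(2)]]) (use False in auto)
    then show ?thesis using adj[OF that False] by simp
  qed
  have inj: "inj_on \<phi> V"
  proof (rule inj_onI)
    fix u v assume uv: "u \<in> V" "v \<in> V" "\<phi> u = \<phi> v"
    show "u = v"
    proof (rule ccontr)
      assume "u \<noteq> v"
      then have "\<not> S u \<subseteq> S v" using Sinc uv by auto
      moreover have "el L f (S v) dvd el L f (S u)" using uv by (simp add: \<phi>_def)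
      ultimately show False using P.el_dvd_el[OF SL] by blast
    qed
  qed
  have verts: "\<phi> ` V \<subseteq> diff_verts G"
  proof
    fix x assume "x \<in> \<phi> ` V"
    then obtain v where v: "v \<in> V" "x = \<phi> v" by auto
    have "\<phi> v \<in> carrier G" using P.el_less[OF SL Sne[OF v(1)]] carr by (simp add: \<phi>_def)
    moreover have "diff_edge G (\<phi> v) (el L f (T v)) \<longleftrightarrow> S v \<inter> T v \<noteq> {}"
      unfolding G_def \<phi>_def
      by (rule P.main_diff[OF SL Sne[OF v(1)] TL[OF v(1)]]) (use Sin[OF v(1)] in \<open>auto simp: T_def S_def\<close>)
    moreover have "S v \<inter> T v \<noteq> {}" using Sin[OF v(1)] by (auto simp: T_def)
    ultimately show "x \<in> diff_verts G" using v by (auto simp: diff_verts_def)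
  qed
  have iso: "induced_subgraph_iso V E (diff_verts G) (diff_edge G)"
    unfolding induced_subgraph_iso_def using inj verts diffS by blast
  have Lne: "L \<noteq> {}" "L \<subseteq> L" unfolding L_def by auto
  have "generate G {el L f L} = carrier G"
    using P.gen_el[OF Lne(2) Lne(1)] carr by (auto simp: G_def el_def)
  moreover have "el L f L \<in> carrier G" using P.el_less[OF Lne(2) Lne(1)] carr by simp
  ultimately have cyc: "cyclic_group G"
    using group.generate_pow[OF grp] group.cyclic_group[OF grp] by blast
  have ord: "order G = P.NN" by (simp add: order_def carr)
  have sq: "squarefree P.NN" unfolding el_def
  proof (simp, rule squarefree_prod_coprime)
    fix a b assume "a \<in> L" "b \<in> L" "a \<noteq> b"
    moreover have "f a \<noteq> f b" using \<open>a \<in> L\<close> \<open>b \<in> L\<close> \<open>a \<noteq> b\<close> P.injf by (auto dest: inj_onD)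
    ultimately show "coprime (f a) (f b)" by (intro primes_coprime P.primef) auto
  next
    fix a assume "a \<in> L" then show "squarefree (f a)" using P.primef squarefree_prime by blast
  qed
  show ?thesis
    using grp cyc ord sq iso carr by (intro exI[of _ G]) auto
qed

end
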